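(* Consider subgradient-push as in the setting below. Suppose $\{\mathbb G(t)\}$ is uniformly strongly connected by sub-sequences of length $L$ and $\|g_i(t)\|\le G$ for all $i,t$, for some $G>0$. Let $\eta,\mu$ be constants as described below. Then for all $t\ge0$ and $i\in\mathcal V$, $$\Big\|z_i(t+1)-\frac1n\sum_{k=1}^n\big(x_k(t)-\alpha(t)g_k(t)\big)\Big\|\le\frac8\eta\mu^t\sum_{k=1}^n\|x_k(0)-\alpha(0)g_k(0)\|+\frac{8nG}{\eta}\sum_{s=1}^t\mu^{t-s}\alpha(s).$$ If in addition $\{\alpha(t)\}$ is positive, non-increasing, with $\sum_t\alpha(t)=\infty$ and $\sum_t\alpha^2(t)<\infty$, then for all $t\ge0$ and $i\in\mathcal V$, $$\Big\|z_i(t+1)-\frac1n\sum_{k=1}^n\big(x_k(t)-\alpha(t)g_k(t)\big)\Big\|\le\frac8\eta\mu^t\sum_{k=1}^n\|x_k(0)-\alpha(0)g_k(0)\|+\frac{8nG}{\eta(1-\mu)}\big(\alpha(0)\mu^{t/2}+\alpha(\lceil t/2\rceil)\big).$$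
   Context: Setting. Fix $n$ agents, $\mathcal V=\{1,\dots,n\}$. For each $t\in\{0,1,2,\dots\}$, $\mathbb G(t)=(\mathcal V,\mathcal E(t))$ is a directed graph containing a self-arc $(i,i)$ at every vertex; $\mathcal N_i(t)=\{j:(j,i)\in\mathcal E(t)\}$ and $\mathcal N_i^-(t)=\{k:(i,k)\in\mathcal E(t)\}$. Weights $w_{ij}(t)$ are positive for $j\in\mathcal N_i(t)$ and $w_{ij}(t)=0$ otherwise, and satisfy: there is $\beta>0$ with $w_{ij}(t)\ge\beta$ whenever $j\in\mathcal N_i(t)$, and $\sum_{j\in\mathcal N_i^-(t)}w_{ji}(t)=1$ for all $i,t$. Write $\Phi_W(t,\tau)=W(t-1)\cdots W(\tau)$ for $t>\tau$, where $W(t)=[w_{ij}(t)]$. The sequence $\{\mathbb G(t)\}$ is uniformly strongly connected by sub-sequences of length $L$ if for every $t\ge0$ the directed graph with vertex set $\mathcal V$ and edge set $\bigcup_{k=t}^{t+L-1}\mathcal E(k)$ is strongly connected. Subgradient-push: each agent $i$ has a convex $f_i:\mathbb R^d\to\mathbb R$; with stepsizes $\alpha(t)>0$, $x_i(t+1)=\sum_{j\in\mathcal N_i(t)}w_{ij}(t)[x_j(t)-\alpha(t)g_j(t)]$, $x_i(0)\in\mathbb R^d$; $y_i(t+1)=\sum_{j\in\mathcal N_i(t)}w_{ij}(t)y_j(t)$, $y_i(0)=1$; $z_i(t)=x_i(t)/y_i(t)$; and $g_i(t)$ is a subgradient of $f_i$ at $z_i(t)$. Constants: $\eta>0$ is any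 constant with $y_i(t)\ge\eta$ for all $i,t$ (such exists, e.g. $\eta=n^{-nL}$); $\mu\in(0,1)$ is any constant for which there exist stochastic vectors $\phi(t)\in\mathbb R^n$ with $|[\Phi_W(t+1,s)]_{ij}-\phi_i(t)|\le4\mu^{t-s}$ for all $i,j\in\mathcal V$, $t\ge s\ge0$ (e.g. $\mu=(1-n^{-nL})^{1/L}$). *)

theory Defs
  imports "HOL-Analysis.Analysis"
begin

text \<open>Agents are indexed by the vertex set V = {1..n}. Time-varying data are
functions of the time t first, then of the agent index.\<close>

definition agents :: "nat \<Rightarrow> nat set" where
  "agents n = {1..n}"

definition in_nbrs :: "(nat \<Rightarrow> (nat \<times> nat) set) \<Rightarrow> nat \<Rightarrow> nat \<Rightarrow> nat set" where
  "in_nbrs E t i = {j. (j, i) \<in> E t}"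

definition out_nbrs :: "(nat \<Rightarrow> (nat \<times> nat) set) \<Rightarrow> nat \<Rightarrow> nat \<Rightarrow> nat set" where
  "out_nbrs E t i = {k. (i, k) \<in> E t}"

definition strongly_connected :: "nat set \<Rightarrow> (nat \<times> nat) set \<Rightarrow> bool" where
  "strongly_connected V A \<longleftrightarrow> (\<forall>i\<in>V. \<forall>j\<in>V. (i, j) \<in> (A \<inter> (V \<times> V))\<^sup>*)"

definition uniformly_strongly_connected ::
    "nat set \<Rightarrow> nat \<Rightarrow> (nat \<Rightarrow> (nat \<times> nat) set) \<Rightarrow> bool" where
  "uniformly_strongly_connected V L E \<longleftrightarrow>
     (\<forall>t. strongly_connected V (\<Union>k\<in>{t..<t + L}. E k))"

fun matprod :: "(nat \<Rightarrow> nat \<Rightarrow> nat \<Rightarrow> real) \<Rightarrow> nat set \<Rightarrow> nat \<Rightarrow> nat \<Rightarrow> nat \<Rightarrow> nat \<Rightarrow> real" where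
  "matprod W V s 0 i j = (if i = j then 1 else 0)"
| "matprod W V s (Suc k) i j = (\<Sum>l\<in>V. W (s + k) i l * matprod W V s k l j)"

text \<open>Phi_W(t, s) = W(t-1) \<cdots> W(s)  (used for t > s).\<close>
definition PhiW :: "(nat \<Rightarrow> nat \<Rightarrow> nat \<Rightarrow> real) \<Rightarrow> nat set \<Rightarrow> nat \<Rightarrow> nat \<Rightarrow> nat \<Rightarrow> nat \<Rightarrow> real" where
  "PhiW W V t s i j = matprod W V s (t - s) i j"

definition stochastic_vec :: "nat set \<Rightarrow> (nat \<Rightarrow> real) \<Rightarrow> bool" where
  "stochastic_vec V p \<longleftrightarrow> (\<forall>i\<in>V. p i \<ge> 0) \<and> (\<Sum>i\<in>V. p i) = 1"

definition is_subgradient :: "('a::real_inner \<Rightarrow> real) \<Rightarrow> 'a \<Rightarrow> 'a \<Rightarrow> bool" where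
  "is_subgradient f z g \<longleftrightarrow> (\<forall>u. f u \<ge> f z + inner g (u - z))"

end

theory Submission imports Defs begin

lemma phi_step:
  "s \<le> t \<Longrightarrow> PhiW W V (Suc t) s i j = (\<Sum>l\<in>V. W t i l * PhiW W V t s l j)"
  by (simp add: PhiW_def Suc_diff_le)

lemma phi_id: "PhiW W V t t i j = (if i = j then 1 else 0)"
  by (simp add: PhiW_def)

lemma delta_sum:
  fixes v :: "nat \<Rightarrow> 'a::real_vector"
  assumes "finite V" "i \<in> V"
  shows "(\<Sum>j\<in>V. (if i = j then 1 else 0) *\<^sub>R v j) = v i"
proof -
  have "(\<Sum>j\<in>V. (if i = j then 1 else 0) *\<^sub>R v j) = (\<Sum>j\<in>V. if i = j then v j else 0)"
    by (rule sum.cong) auto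
  also have "\<dots> = v i" using assms by simp
  finally show ?thesis .
qed

lemma delta_sum_real:
  assumes "finite V" "i \<in> V"
  shows "(\<Sum>j\<in>V. (if i = j then 1 else 0::real)) = 1"
  using assms by simp

lemma lin_comb:
  fixes v :: "nat \<Rightarrow> 'a::real_vector"
  assumes "finite V"
  shows "(\<Sum>l\<in>V. a l *\<^sub>R (\<Sum>j\<in>V. P l j *\<^sub>R v j)) = (\<Sum>j\<in>V. (\<Sum>l\<in>V. a l * P l j) *\<^sub>R v j)"
proof -
  have "(\<Sum>l\<in>V. a l *\<^sub>R (\<Sum>j\<in>V. P l j *\<^sub>R v j)) = (\<Sum>l\<in>V. \<Sum>j\<in>V. (a l * P l j) *\<^sub>R v j)"
    by (simp add: scaleR_sum_right)
  also have "\<dots> = (\<Sum>j\<in>V. \<Sum>l\<in>V. (a l * P l j) *\<^sub>R v j)" by (rule sum.swap)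
  also have "\<dots> = (\<Sum>j\<in>V. (\<Sum>l\<in>V. a l * P l j) *\<^sub>R v j)" by (simp add: scaleR_sum_left)
  finally show ?thesis .
qed

lemma geo_bound:
  fixes \<mu> :: real
  assumes "0 < \<mu>" "\<mu> < 1"
  shows "(\<Sum>s\<le>b. \<mu> ^ (b - s)) \<le> 1 / (1 - \<mu>)"
proof (induction b)
  case 0 then show ?case using assms by (simp add: field_simps)
next
  case (Suc b)
  have "(\<Sum>s\<le>Suc b. \<mu> ^ (Suc b - s)) = (\<Sum>s\<le>b. \<mu> ^ (Suc b - s)) + 1" by simp
  also have "(\<Sum>s\<le>b. \<mu> ^ (Suc b - s)) = \<mu> * (\<Sum>s\<le>b. \<mu> ^ (b - s))"
    by (simp add: sum_distrib_left Suc_diff_le)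
  also have "\<mu> * (\<Sum>s\<le>b. \<mu> ^ (b - s)) + 1 \<le> \<mu> * (1 / (1 - \<mu>)) + 1"
    using Suc assms by (intro add_right_mono mult_left_mono) auto
  also have "\<dots> = 1 / (1 - \<mu>)" using assms by (simp add: field_simps)
  finally show ?case .
qed

lemma geo_bound2:
  fixes \<mu> :: real
  assumes "0 < \<mu>" "\<mu> < 1"
  shows "(\<Sum>s\<in>{a..b}. \<mu> ^ (b - s)) \<le> 1 / (1 - \<mu>)"
proof -
  have "(\<Sum>s\<in>{a..b}. \<mu> ^ (b - s)) \<le> (\<Sum>s\<le>b. \<mu> ^ (b - s))"
    by (rule sum_mono2) (use assms in auto)
  then show ?thesis using geo_bound[OF assms, of b] by linarith
qed

lemma tail_bound:
  fixes \<mu> :: real and \<alpha> :: "nat \<Rightarrow> real"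
  assumes mu: "0 < \<mu>" "\<mu> < 1" and dec: "decseq \<alpha>" and pos: "\<And>t. \<alpha> t > 0"
  shows "(\<Sum>s\<in>{1..t}. \<mu> ^ (t - s) * \<alpha> s)
     \<le> 1 / (1 - \<mu>) * (\<alpha> 0 * \<mu> powr (real t / 2) + \<alpha> (nat \<lceil>real t / 2\<rceil>))"
proof -
  define m where "m = nat \<lceil>real t / 2\<rceil>"
  have rm: "real m = real_of_int \<lceil>real t / 2\<rceil>" unfolding m_def by simp
  have "real_of_int \<lceil>real t / 2\<rceil> < real t / 2 + 1" by linarith
  then have m1: "real m < real t / 2 + 1" using rm by simp
  then have mle: "m \<le> t + 1" by linarith
  have kge: "real (t + 1 - m) \<ge> real t / 2" using m1 mle by (simp add: of_nat_diff)
  have c1: "1 / (1 - \<mu>) > 0" using mu by simp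
  have nn: "\<And>s. 0 \<le> \<mu> ^ (t - s) * \<alpha> s" using mu pos by (simp add: less_imp_le)
  have "(\<Sum>s\<in>{1..t}. \<mu> ^ (t - s) * \<alpha> s) \<le> (\<Sum>s\<in>{1..<m} \<union> {m..t}. \<mu> ^ (t - s) * \<alpha> s)"
    by (rule sum_mono2) (auto simp: nn)
  also have "\<dots> = (\<Sum>s\<in>{1..<m}. \<mu> ^ (t - s) * \<alpha> s) + (\<Sum>s\<in>{m..t}. \<mu> ^ (t - s) * \<alpha> s)"
    by (rule sum.union_disjoint) auto
  also have "(\<Sum>s\<in>{1..<m}. \<mu> ^ (t - s) * \<alpha> s) \<le> \<alpha> 0 * \<mu> powr (real t / 2) * (1 / (1 - \<mu>))"
  proof -
    have "(\<Sum>s\<in>{1..<m}. \<mu> ^ (t - s) * \<alpha> s) \<le> (\<Sum>s\<in>{1..<m}. \<mu> ^ (t + 1 - m) * \<mu> ^ (m - 1 - s) * \<alpha> 0)"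
    proof (rule sum_mono)
      fix s assume s: "s \<in> {1..<m}"
      have "t - s = (t + 1 - m) + (m - 1 - s)" using s mle by auto
      then have e: "\<mu> ^ (t - s) = \<mu> ^ (t + 1 - m) * \<mu> ^ (m - 1 - s)" by (simp add: power_add)
      have "\<alpha> s \<le> \<alpha> 0" using dec by (simp add: decseq_def)
      then show "\<mu> ^ (t - s) * \<alpha> s \<le> \<mu> ^ (t + 1 - m) * \<mu> ^ (m - 1 - s) * \<alpha> 0"
        unfolding e using mu by (intro mult_left_mono) auto
    qed
    also have "\<dots> = \<mu> ^ (t + 1 - m) * \<alpha> 0 * (\<Sum>s\<in>{1..<m}. \<mu> ^ (m - 1 - s))"
      by (simp add: sum_distrib_left mult_ac)
    also have "(\<Sum>s\<in>{1..<m}. \<mu> ^ (m - 1 - s)) \<le> 1 / (1 - \<mu>)"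
    proof -
      have "(\<Sum>s\<in>{1..<m}. \<mu> ^ (m - 1 - s)) \<le> (\<Sum>s\<in>{1..m-1}. \<mu> ^ (m - 1 - s))"
        by (rule sum_mono2) (use mu in auto)
      then show ?thesis using geo_bound2[OF mu, where a=1 and b="m-1"] by linarith
    qed
    then have "\<mu> ^ (t + 1 - m) * \<alpha> 0 * (\<Sum>s\<in>{1..<m}. \<mu> ^ (m - 1 - s)) \<le> \<mu> ^ (t + 1 - m) * \<alpha> 0 * (1 / (1 - \<mu>))"
      using mu pos[of 0] by (intro mult_left_mono) auto
    also have "\<mu> ^ (t + 1 - m) \<le> \<mu> powr (real t / 2)"
    proof -
      have "\<mu> ^ (t + 1 - m) = \<mu> powr real (t + 1 - m)" using mu by (simp add: powr_realpow)
      also have "\<dots> \<le> \<mu> powr (real t / 2)" using kge mu by (intro powr_mono') auto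
      finally show ?thesis .
    qed
    then have "\<mu> ^ (t + 1 - m) * \<alpha> 0 * (1 / (1 - \<mu>)) \<le> \<alpha> 0 * \<mu> powr (real t / 2) * (1 / (1 - \<mu>))"
      using c1 pos[of 0] by (intro mult_right_mono mult_left_mono) auto
    finally show ?thesis by simp
  qed
  also have "(\<Sum>s\<in>{m..t}. \<mu> ^ (t - s) * \<alpha> s) \<le> \<alpha> m * (1 / (1 - \<mu>))"
  proof -
    have "(\<Sum>s\<in>{m..t}. \<mu> ^ (t - s) * \<alpha> s) \<le> (\<Sum>s\<in>{m..t}. \<mu> ^ (t - s) * \<alpha> m)"
      by (rule sum_mono) (use dec mu in \<open>auto simp: decseq_def intro!: mult_left_mono\<close>)
    also have "\<dots> = \<alpha> m * (\<Sum>s\<in>{m..t}. \<mu> ^ (t - s))" by (simp add: sum_distrib_left mult_ac)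
    also have "\<dots> \<le> \<alpha> m * (1 / (1 - \<mu>))"
      using geo_bound2[OF mu, where a=m and b=t] pos[of m] by (intro mult_left_mono) auto
    finally show ?thesis .
  qed
  finally show ?thesis unfolding m_def by (simp add: algebra_simps)
qed

theorem lemma8:
  fixes n L :: nat
    and E :: "nat \<Rightarrow> (nat \<times> nat) set"
    and w :: "nat \<Rightarrow> nat \<Rightarrow> nat \<Rightarrow> real"
    and \<beta> :: real
    and f :: "nat \<Rightarrow> 'a::euclidean_space \<Rightarrow> real"
    and \<alpha> :: "nat \<Rightarrow> real"
    and x z g :: "nat \<Rightarrow> nat \<Rightarrow> 'a"
    and y :: "nat \<Rightarrow> nat \<Rightarrow> real"
    and G \<eta> \<mu> :: real
  defines "V \<equiv> agents n"
  assumes graph: "\<And>t. E t \<subseteq> V \<times> V"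
    and selfloops: "\<And>t i. i \<in> V \<Longrightarrow> (i, i) \<in> E t"
    and beta_pos: "\<beta> > 0"
    and w_pos: "\<And>t i j. j \<in> in_nbrs E t i \<Longrightarrow> w t i j \<ge> \<beta>"
    and w_zero: "\<And>t i j. j \<notin> in_nbrs E t i \<Longrightarrow> w t i j = 0"
    and w_colsum: "\<And>t i. i \<in> V \<Longrightarrow> (\<Sum>j\<in>out_nbrs E t i. w t j i) = 1"
    and usc: "uniformly_strongly_connected V L E"
    and convex: "\<And>i. i \<in> V \<Longrightarrow> convex_on UNIV (f i)"
    and alpha_pos: "\<And>t. \<alpha> t > 0"
    and x_step: "\<And>t i. i \<in> V \<Longrightarrow>
        x (Suc t) i = (\<Sum>j\<in>in_nbrs E t i. w t i j *\<^sub>R (x t j - \<alpha> t *\<^sub>R g t j))"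
    and y_init: "\<And>i. i \<in> V \<Longrightarrow> y 0 i = 1"
    and y_step: "\<And>t i. i \<in> V \<Longrightarrow> y (Suc t) i = (\<Sum>j\<in>in_nbrs E t i. w t i j * y t j)"
    and z_def: "\<And>t i. i \<in> V \<Longrightarrow> z t i = (1 / y t i) *\<^sub>R x t i"
    and subgrad: "\<And>t i. i \<in> V \<Longrightarrow> is_subgradient (f i) (z t i) (g t i)"
    and G_pos: "G > 0"
    and g_bound: "\<And>t i. i \<in> V \<Longrightarrow> norm (g t i) \<le> G"
    and eta_pos: "\<eta> > 0"
    and eta_bound: "\<And>t i. i \<in> V \<Longrightarrow> y t i \<ge> \<eta>"
    and mu_range: "0 < \<mu>" "\<mu> < 1"
    and mu_mix: "\<exists>\<phi>::nat \<Rightarrow> nat \<Rightarrow> real. \<forall>t. stochastic_vec V (\<phi> t) \<and>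
        (\<forall>s\<le>t. \<forall>i\<in>V. \<forall>j\<in>V. \<bar>PhiW w V (t + 1) s i j - \<phi> t i\<bar> \<le> 4 * \<mu> ^ (t - s))"
  shows "(\<forall>t. \<forall>i\<in>V.
            norm (z (t + 1) i - (1 / real n) *\<^sub>R (\<Sum>k\<in>V. x t k - \<alpha> t *\<^sub>R g t k))
            \<le> 8 / \<eta> * \<mu> ^ t * (\<Sum>k\<in>V. norm (x 0 k - \<alpha> 0 *\<^sub>R g 0 k))
              + 8 * real n * G / \<eta> * (\<Sum>s\<in>{1..t}. \<mu> ^ (t - s) * \<alpha> s))
       \<and> ((decseq \<alpha> \<and> filterlim (\<lambda>T. \<Sum>t<T. \<alpha> t) at_top sequentially
            \<and> summable (\<lambda>t. (\<alpha> t)\<^sup>2)) \<longrightarrow>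
          (\<forall>t. \<forall>i\<in>V.
            norm (z (t + 1) i - (1 / real n) *\<^sub>R (\<Sum>k\<in>V. x t k - \<alpha> t *\<^sub>R g t k))
            \<le> 8 / \<eta> * \<mu> ^ t * (\<Sum>k\<in>V. norm (x 0 k - \<alpha> 0 *\<^sub>R g 0 k))
              + 8 * real n * G / (\<eta> * (1 - \<mu>))
                * (\<alpha> 0 * \<mu> powr (real t / 2) + \<alpha> (nat \<lceil>real t / 2\<rceil>))))"
proof -
  have finV: "finite V" and cardV: "card V = n" by (simp_all add: V_def agents_def)
  obtain \<phi> :: "nat \<Rightarrow> nat \<Rightarrow> real" where phi0: "\<forall>t. stochastic_vec V (\<phi> t) \<and>
        (\<forall>s\<le>t. \<forall>i\<in>V. \<forall>j\<in>V. \<bar>PhiW w V (t + 1) s i j - \<phi> t i\<bar> \<le> 4 * \<mu> ^ (t - s))"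
    using mu_mix by blast
  have phi: "\<And>t s i j. s \<le> t \<Longrightarrow> i \<in> V \<Longrightarrow> j \<in> V \<Longrightarrow>
      \<bar>PhiW w V (Suc t) s i j - \<phi> t i\<bar> \<le> 4 * \<mu> ^ (t - s)"
    using phi0 by simp
  define u where "u t j = x t j - \<alpha> t *\<^sub>R g t j" for t j
  have inV: "in_nbrs E t i \<subseteq> V" for t i using graph by (auto simp: in_nbrs_def)
  have outV: "out_nbrs E t i \<subseteq> V" for t i using graph by (auto simp: out_nbrs_def)
  have xV: "x (Suc t) i = (\<Sum>j\<in>V. w t i j *\<^sub>R u t j)" if "i \<in> V" for t i
  proof -
    have "x (Suc t) i = (\<Sum>j\<in>in_nbrs E t i. w t i j *\<^sub>R u t j)"
      using x_step[OF that] by (simp add: u_def)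
    also have "\<dots> = (\<Sum>j\<in>V. w t i j *\<^sub>R u t j)"
      by (rule sum.mono_neutral_left) (use finV inV w_zero in auto)
    finally show ?thesis .
  qed
  have yV: "y (Suc t) i = (\<Sum>j\<in>V. w t i j * y t j)" if "i \<in> V" for t i
  proof -
    have "y (Suc t) i = (\<Sum>j\<in>in_nbrs E t i. w t i j * y t j)"
      using y_step[OF that] by simp
    also have "\<dots> = (\<Sum>j\<in>V. w t i j * y t j)"
      by (rule sum.mono_neutral_left) (use finV inV w_zero in auto)
    finally show ?thesis .
  qed
  have colW: "(\<Sum>i\<in>V. w t i j) = 1" if "j \<in> V" for t j
  proof -
    have "(\<Sum>i\<in>V. w t i j) = (\<Sum>i\<in>out_nbrs E t j. w t i j)"
      by (rule sum.mono_neutral_right) (use finV outV w_zero in \<open>auto simp: in_nbrs_def out_nbrs_def\<close>)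
    then show ?thesis using w_colsum[OF that] by simp
  qed
  have sum_x: "(\<Sum>i\<in>V. x (Suc t) i) = (\<Sum>j\<in>V. u t j)" for t
  proof -
    have "(\<Sum>i\<in>V. x (Suc t) i) = (\<Sum>i\<in>V. \<Sum>j\<in>V. w t i j *\<^sub>R u t j)"
      using xV by simp
    also have "\<dots> = (\<Sum>j\<in>V. \<Sum>i\<in>V. w t i j *\<^sub>R u t j)" by (rule sum.swap)
    also have "\<dots> = (\<Sum>j\<in>V. (\<Sum>i\<in>V. w t i j) *\<^sub>R u t j)" by (simp add: scaleR_sum_left)
    also have "\<dots> = (\<Sum>j\<in>V. u t j)" using colW by simp
    finally show ?thesis .
  qed
  have sum_u: "(\<Sum>j\<in>V. u t j) = (\<Sum>j\<in>V. u 0 j) - (\<Sum>s\<in>{1..t}. \<alpha> s *\<^sub>R (\<Sum>j\<in>V. g s j))" for t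
  proof (induction t)
    case 0 then show ?case by simp
  next
    case (Suc t)
    have "(\<Sum>j\<in>V. u (Suc t) j) = (\<Sum>j\<in>V. x (Suc t) j) - \<alpha> (Suc t) *\<^sub>R (\<Sum>j\<in>V. g (Suc t) j)"
      by (simp add: u_def sum_subtractf scaleR_sum_right)
    also have "\<dots> = (\<Sum>j\<in>V. u 0 j) - (\<Sum>s\<in>{1..t}. \<alpha> s *\<^sub>R (\<Sum>j\<in>V. g s j)) - \<alpha> (Suc t) *\<^sub>R (\<Sum>j\<in>V. g (Suc t) j)"
      using Suc sum_x by simp
    also have "\<dots> = (\<Sum>j\<in>V. u 0 j) - (\<Sum>s\<in>{1..Suc t}. \<alpha> s *\<^sub>R (\<Sum>j\<in>V. g s j))"
      by simp
    finally show ?case .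
  qed
  define A where "A t i = (\<Sum>j\<in>V. PhiW w V t 0 i j *\<^sub>R u 0 j)" for t i
  define C where "C t T i = (\<Sum>s\<in>{1..t}. \<alpha> s *\<^sub>R (\<Sum>j\<in>V. PhiW w V T s i j *\<^sub>R g s j))" for t T i
  have xrep_from: "x (Suc t) i = A (Suc t) i - C t (Suc t) i"
    if IH: "\<forall>l\<in>V. u t l = A t l - C t t l" and i: "i \<in> V" for t i
  proof -
    have "x (Suc t) i = (\<Sum>l\<in>V. w t i l *\<^sub>R (A t l - C t t l))" using xV[OF i] IH by simp
    also have "\<dots> = (\<Sum>l\<in>V. w t i l *\<^sub>R A t l) - (\<Sum>l\<in>V. w t i l *\<^sub>R C t t l)"
      by (simp add: scaleR_diff_right sum_subtractf)
    also have "(\<Sum>l\<in>V. w t i l *\<^sub>R A t l) = A (Suc t) i"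
      unfolding A_def by (simp add: lin_comb[OF finV] phi_step)
    also have "(\<Sum>l\<in>V. w t i l *\<^sub>R C t t l) = C t (Suc t) i"
    proof -
      have "(\<Sum>l\<in>V. w t i l *\<^sub>R C t t l) = (\<Sum>s\<in>{1..t}. \<alpha> s *\<^sub>R (\<Sum>l\<in>V. w t i l *\<^sub>R (\<Sum>j\<in>V. PhiW w V t s l j *\<^sub>R g s j)))"
      proof -
        have "(\<Sum>l\<in>V. w t i l *\<^sub>R C t t l) = (\<Sum>l\<in>V. \<Sum>s\<in>{1..t}. \<alpha> s *\<^sub>R (w t i l *\<^sub>R (\<Sum>j\<in>V. PhiW w V t s l j *\<^sub>R g s j)))"
          unfolding C_def scaleR_sum_right by (simp add: ac_simps)
        also have "\<dots> = (\<Sum>s\<in>{1..t}. \<Sum>l\<in>V. \<alpha> s *\<^sub>R (w t i l *\<^sub>R (\<Sum>j\<in>V. PhiW w V t s l j *\<^sub>R g s j)))"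
          by (rule sum.swap)
        also have "\<dots> = (\<Sum>s\<in>{1..t}. \<alpha> s *\<^sub>R (\<Sum>l\<in>V. w t i l *\<^sub>R (\<Sum>j\<in>V. PhiW w V t s l j *\<^sub>R g s j)))"
          by (simp only: scaleR_sum_right)
        finally show ?thesis .
      qed
      also have "\<dots> = C t (Suc t) i"
        unfolding C_def by (rule sum.cong) (simp_all add: lin_comb[OF finV] phi_step)
      finally show ?thesis .
    qed
    finally show ?thesis .
  qed
  have urep: "\<forall>i\<in>V. u t i = A t i - C t t i" for t
  proof (induction t)
    case 0 then show ?case by (simp add: A_def C_def phi_id delta_sum[OF finV])
  next
    case (Suc t)
    show ?case
    proof
      fix i assume i: "i \<in> V"
      have e1: "u (Suc t) i = A (Suc t) i - C t (Suc t) i - \<alpha> (Suc t) *\<^sub>R g (Suc t) i"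
        using xrep_from[OF Suc i] by (simp add: u_def)
      have e2: "C (Suc t) (Suc t) i = C t (Suc t) i + \<alpha> (Suc t) *\<^sub>R g (Suc t) i"
        by (simp add: C_def phi_id delta_sum[OF finV i] add.commute)
      show "u (Suc t) i = A (Suc t) i - C (Suc t) (Suc t) i"
        using e1 e2 by (simp add: algebra_simps)
    qed
  qed
  have xrep: "x (Suc t) i = A (Suc t) i - C t (Suc t) i" if "i \<in> V" for t i
    using xrep_from[OF urep that] .
  have yrep: "\<forall>i\<in>V. y t i = (\<Sum>j\<in>V. PhiW w V t 0 i j)" for t
  proof (induction t)
    case 0 then show ?case using finV by (simp add: y_init phi_id)
  next
    case (Suc t)
    show ?case
    proof
      fix i assume i: "i \<in> V"
      have "y (Suc t) i = (\<Sum>l\<in>V. w t i l * (\<Sum>j\<in>V. PhiW w V t 0 l j))" using yV[OF i] Suc by simp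
      also have "\<dots> = (\<Sum>l\<in>V. \<Sum>j\<in>V. w t i l * PhiW w V t 0 l j)" by (simp add: sum_distrib_left)
      also have "\<dots> = (\<Sum>j\<in>V. \<Sum>l\<in>V. w t i l * PhiW w V t 0 l j)" by (rule sum.swap)
      also have "\<dots> = (\<Sum>j\<in>V. PhiW w V (Suc t) 0 i j)" by (simp add: phi_step)
      finally show "y (Suc t) i = (\<Sum>j\<in>V. PhiW w V (Suc t) 0 i j)" .
    qed
  qed
  have main: "norm (z (t + 1) i - (1 / real n) *\<^sub>R (\<Sum>k\<in>V. x t k - \<alpha> t *\<^sub>R g t k))
            \<le> 8 / \<eta> * \<mu> ^ t * (\<Sum>k\<in>V. norm (x 0 k - \<alpha> 0 *\<^sub>R g 0 k))
              + 8 * real n * G / \<eta> * (\<Sum>s\<in>{1..t}. \<mu> ^ (t - s) * \<alpha> s)" if i: "i \<in> V" for t i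
  proof -
    have npos: "real n > 0" using i by (simp add: V_def agents_def)
    define ub where "ub = (1 / real n) *\<^sub>R (\<Sum>k\<in>V. u t k)"
    define S0 where "S0 = (\<Sum>j\<in>V. u 0 j)"
    define GS where "GS s = (\<Sum>j\<in>V. g s j)" for s
    define c where "c = \<phi> t i"
    define X where "X = x (Suc t) i"
    define Y where "Y = y (Suc t) i"
    define D where "D j = PhiW w V (Suc t) 0 i j" for j
    define P where "P s j = PhiW w V (Suc t) s i j" for s j
    define AA where "AA = (\<Sum>j\<in>V. norm (u 0 j))"
    define SA where "SA = (\<Sum>s\<in>{1..t}. \<mu> ^ (t - s) * \<alpha> s)"
    have Ypos: "Y \<ge> \<eta>" unfolding Y_def using eta_bound[OF i] .
    have nub: "real n *\<^sub>R ub = S0 - (\<Sum>s\<in>{1..t}. \<alpha> s *\<^sub>R GS s)"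
    proof -
      have "real n *\<^sub>R ub = (real n * (1 / real n)) *\<^sub>R (\<Sum>k\<in>V. u t k)"
        unfolding ub_def by (simp only: scaleR_scaleR)
      also have "real n * (1 / real n) = 1" using npos by simp
      finally have "real n *\<^sub>R ub = (\<Sum>k\<in>V. u t k)" by simp
      then show ?thesis unfolding S0_def GS_def using sum_u[of t] by simp
    qed
    have Yeq: "Y = (\<Sum>j\<in>V. D j)" using yrep i by (simp add: Y_def D_def)
    have Xeq: "X = (\<Sum>j\<in>V. D j *\<^sub>R u 0 j) - (\<Sum>s\<in>{1..t}. \<alpha> s *\<^sub>R (\<Sum>j\<in>V. P s j *\<^sub>R g s j))"
      using xrep[OF i] by (simp add: X_def A_def C_def D_def P_def)
    define T1 where "T1 = (\<Sum>j\<in>V. (D j - c) *\<^sub>R u 0 j)"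
    define T2 where "T2 = (\<Sum>s\<in>{1..t}. \<alpha> s *\<^sub>R (\<Sum>j\<in>V. (P s j - c) *\<^sub>R g s j))"
    have T1eq: "T1 = (\<Sum>j\<in>V. D j *\<^sub>R u 0 j) - c *\<^sub>R S0"
      by (simp add: T1_def S0_def scaleR_diff_left sum_subtractf scaleR_sum_right)
    have T2eq: "T2 = (\<Sum>s\<in>{1..t}. \<alpha> s *\<^sub>R (\<Sum>j\<in>V. P s j *\<^sub>R g s j)) - c *\<^sub>R (\<Sum>s\<in>{1..t}. \<alpha> s *\<^sub>R GS s)"
      by (simp add: T2_def GS_def scaleR_diff_left sum_subtractf scaleR_sum_right scaleR_diff_right
          algebra_simps)
    have key: "X - Y *\<^sub>R ub = T1 - T2 + (real n * c - Y) *\<^sub>R ub"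
    proof -
      have "(real n * c) *\<^sub>R ub = c *\<^sub>R (real n *\<^sub>R ub)" by (simp add: mult.commute)
      also have "\<dots> = c *\<^sub>R S0 - c *\<^sub>R (\<Sum>s\<in>{1..t}. \<alpha> s *\<^sub>R GS s)"
        by (simp add: nub scaleR_diff_right)
      finally have e: "(real n * c) *\<^sub>R ub = c *\<^sub>R S0 - c *\<^sub>R (\<Sum>s\<in>{1..t}. \<alpha> s *\<^sub>R GS s)" .
      show ?thesis unfolding T1eq T2eq Xeq scaleR_diff_left e by (simp add: algebra_simps)
    qed
    have b1: "norm T1 \<le> 4 * \<mu> ^ t * AA"
    proof -
      have "norm T1 \<le> (\<Sum>j\<in>V. \<bar>D j - c\<bar> * norm (u 0 j))"
        unfolding T1_def by (rule order_trans[OF norm_sum]) simp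
      also have "\<dots> \<le> (\<Sum>j\<in>V. 4 * \<mu> ^ t * norm (u 0 j))"
        by (rule sum_mono, rule mult_right_mono) (use phi[of 0 t i] i in \<open>auto simp: D_def c_def\<close>)
      finally show ?thesis by (simp add: AA_def sum_distrib_left)
    qed
    have b2: "norm T2 \<le> 4 * real n * G * SA"
    proof -
      have "norm T2 \<le> (\<Sum>s\<in>{1..t}. norm (\<alpha> s *\<^sub>R (\<Sum>j\<in>V. (P s j - c) *\<^sub>R g s j)))"
        unfolding T2_def by (rule norm_sum)
      also have "\<dots> \<le> (\<Sum>s\<in>{1..t}. 4 * real n * G * (\<mu> ^ (t - s) * \<alpha> s))"
      proof (rule sum_mono)
        fix s assume s: "s \<in> {1..t}"
        have "norm (\<Sum>j\<in>V. (P s j - c) *\<^sub>R g s j) \<le> (\<Sum>j\<in>V. \<bar>P s j - c\<bar> * norm (g s j))"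
          by (rule order_trans[OF norm_sum]) simp
        also have "\<dots> \<le> (\<Sum>j\<in>V. 4 * \<mu> ^ (t - s) * G)"
          by (rule sum_mono, rule mult_mono) (use phi[of s t i] i s g_bound mu_range in \<open>auto simp: P_def c_def\<close>)
        also have "\<dots> = real n * (4 * \<mu> ^ (t - s) * G)" using cardV by simp
        finally have "norm (\<Sum>j\<in>V. (P s j - c) *\<^sub>R g s j) \<le> real n * (4 * \<mu> ^ (t - s) * G)" .
        then have "\<alpha> s * norm (\<Sum>j\<in>V. (P s j - c) *\<^sub>R g s j) \<le> \<alpha> s * (real n * (4 * \<mu> ^ (t - s) * G))"
          using alpha_pos[of s] by (intro mult_left_mono) auto
        then show "norm (\<alpha> s *\<^sub>R (\<Sum>j\<in>V. (P s j - c) *\<^sub>R g s j)) \<le> 4 * real n * G * (\<mu> ^ (t - s) * \<alpha> s)"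
          using alpha_pos[of s] by (simp add: mult_ac)
      qed
      finally show ?thesis by (simp add: SA_def sum_distrib_left)
    qed
    have b3: "\<bar>real n * c - Y\<bar> \<le> real n * (4 * \<mu> ^ t)"
    proof -
      have "real n * c - Y = (\<Sum>j\<in>V. c - D j)" using cardV by (simp add: Yeq sum_subtractf)
      then have "\<bar>real n * c - Y\<bar> \<le> (\<Sum>j\<in>V. \<bar>c - D j\<bar>)" by (simp add: sum_abs)
      also have "\<dots> \<le> (\<Sum>j\<in>V. 4 * \<mu> ^ t)"
        by (rule sum_mono) (use phi[of 0 t i] i in \<open>auto simp: D_def c_def abs_minus_commute\<close>)
      finally show ?thesis using cardV by simp
    qed
    have SAa: "(\<Sum>s\<in>{1..t}. \<alpha> s) * \<mu> ^ t \<le> SA"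
      unfolding SA_def sum_distrib_right
    proof (rule sum_mono)
      fix s assume s: "s \<in> {1..t}"
      have "\<mu> ^ t \<le> \<mu> ^ (t - s)" using mu_range by (intro power_decreasing) auto
      then show "\<alpha> s * \<mu> ^ t \<le> \<mu> ^ (t - s) * \<alpha> s" using alpha_pos[of s] by (simp add: mult.commute)
    qed
    have b4: "real n * norm ub \<le> AA + real n * G * (\<Sum>s\<in>{1..t}. \<alpha> s)"
    proof -
      have h1: "real n * norm ub = norm (real n *\<^sub>R ub)" using npos by simp
      have h2: "norm (real n *\<^sub>R ub) \<le> norm S0 + norm (\<Sum>s\<in>{1..t}. \<alpha> s *\<^sub>R GS s)" unfolding nub by (rule norm_triangle_ineq4)
      have h3: "norm S0 \<le> AA" unfolding S0_def AA_def by (rule norm_sum)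
      have h4: "norm (\<Sum>s\<in>{1..t}. \<alpha> s *\<^sub>R GS s) \<le> (\<Sum>s\<in>{1..t}. \<alpha> s * (real n * G))"
      proof (rule order_trans[OF norm_sum], rule sum_mono)
        fix s
        have "norm (GS s) \<le> (\<Sum>j\<in>V. norm (g s j))" unfolding GS_def by (rule norm_sum)
        also have "\<dots> \<le> (\<Sum>j\<in>V. G)" by (rule sum_mono) (use g_bound in auto)
        finally have "norm (GS s) \<le> real n * G" using cardV by simp
        then show "norm (\<alpha> s *\<^sub>R GS s) \<le> \<alpha> s * (real n * G)"
          using alpha_pos[of s] by (simp add: mult_left_mono)
      qed
      from h1 h2 h3 h4 have f: "real n * norm ub \<le> AA + (\<Sum>s\<in>{1..t}. \<alpha> s * (real n * G))" by linarith
      have "(\<Sum>s\<in>{1..t}. \<alpha> s * (real n * G)) = (\<Sum>s\<in>{1..t}. \<alpha> s) * (real n * G)"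
        by (simp only: sum_distrib_right[symmetric])
      with f show ?thesis by (simp add: ac_simps)
    qed
    have b34: "norm ((real n * c - Y) *\<^sub>R ub) \<le> 4 * \<mu> ^ t * AA + 4 * real n * G * SA"
    proof -
      have "norm ((real n * c - Y) *\<^sub>R ub) = \<bar>real n * c - Y\<bar> * norm ub" by simp
      also have "\<dots> \<le> real n * (4 * \<mu> ^ t) * norm ub"
        by (rule mult_right_mono[OF b3]) simp
      also have "\<dots> = 4 * \<mu> ^ t * (real n * norm ub)" by simp
      also have "\<dots> \<le> 4 * \<mu> ^ t * (AA + real n * G * (\<Sum>s\<in>{1..t}. \<alpha> s))"
        using b4 mu_range by (intro mult_left_mono) auto
      also have "\<dots> = 4 * \<mu> ^ t * AA + 4 * real n * G * ((\<Sum>s\<in>{1..t}. \<alpha> s) * \<mu> ^ t)"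
        by (simp add: algebra_simps)
      also have "\<dots> \<le> 4 * \<mu> ^ t * AA + 4 * real n * G * SA"
        using SAa npos G_pos by (intro add_left_mono mult_left_mono) auto
      finally show ?thesis .
    qed
    have R: "norm (X - Y *\<^sub>R ub) \<le> 8 * \<mu> ^ t * AA + 8 * real n * G * SA"
    proof -
      have "norm (X - Y *\<^sub>R ub) \<le> norm T1 + norm T2 + norm ((real n * c - Y) *\<^sub>R ub)"
        unfolding key by (metis norm_triangle_ineq norm_triangle_ineq4 add_right_mono order_trans)
      then show ?thesis using b1 b2 b34 by linarith
    qed
    have Ygt: "Y > 0" using Ypos eta_pos by linarith
    have zeq: "z (t + 1) i - ub = (1 / Y) *\<^sub>R (X - Y *\<^sub>R ub)"
      using Ygt z_def[OF i, of "Suc t"] by (simp add: X_def Y_def scaleR_diff_right)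
    have "norm (z (t + 1) i - ub) = (1 / Y) * norm (X - Y *\<^sub>R ub)" unfolding zeq norm_scaleR using Ygt by simp
    also have "\<dots> \<le> (1 / \<eta>) * norm (X - Y *\<^sub>R ub)"
      using Ypos eta_pos by (intro mult_right_mono) (auto simp: field_simps)
    also have "\<dots> \<le> (1 / \<eta>) * (8 * \<mu> ^ t * AA + 8 * real n * G * SA)"
      using R eta_pos by (intro mult_left_mono) auto
    also have "\<dots> = 8 / \<eta> * \<mu> ^ t * AA + 8 * real n * G / \<eta> * SA" by (simp add: field_simps add_divide_distrib)
    finally show ?thesis by (simp add: ub_def u_def AA_def SA_def)
  qed
  show ?thesis
  proof (intro conjI impI allI ballI)
    fix t i assume "i \<in> V"
    then show "norm (z (t + 1) i - (1 / real n) *\<^sub>R (\<Sum>k\<in>V. x t k - \<alpha> t *\<^sub>R g t k))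
            \<le> 8 / \<eta> * \<mu> ^ t * (\<Sum>k\<in>V. norm (x 0 k - \<alpha> 0 *\<^sub>R g 0 k))
              + 8 * real n * G / \<eta> * (\<Sum>s\<in>{1..t}. \<mu> ^ (t - s) * \<alpha> s)" by (rule main)
  next
    fix t i
    assume H: "decseq \<alpha> \<and> filterlim (\<lambda>T. \<Sum>t<T. \<alpha> t) at_top sequentially \<and> summable (\<lambda>t. (\<alpha> t)\<^sup>2)"
      and i: "i \<in> V"
    have npos: "real n > 0" using i by (simp add: V_def agents_def)
    have tb: "(\<Sum>s\<in>{1..t}. \<mu> ^ (t - s) * \<alpha> s)
       \<le> 1 / (1 - \<mu>) * (\<alpha> 0 * \<mu> powr (real t / 2) + \<alpha> (nat \<lceil>real t / 2\<rceil>))"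
      using tail_bound[OF mu_range, of \<alpha> t] H alpha_pos by blast
    have cpos: "8 * real n * G / \<eta> \<ge> 0" using npos G_pos eta_pos by simp
    have "8 * real n * G / \<eta> * (\<Sum>s\<in>{1..t}. \<mu> ^ (t - s) * \<alpha> s)
       \<le> 8 * real n * G / \<eta> * (1 / (1 - \<mu>) * (\<alpha> 0 * \<mu> powr (real t / 2) + \<alpha> (nat \<lceil>real t / 2\<rceil>)))"
      using tb cpos by (rule mult_left_mono)
    also have "\<dots> = 8 * real n * G / (\<eta> * (1 - \<mu>)) * (\<alpha> 0 * \<mu> powr (real t / 2) + \<alpha> (nat \<lceil>real t / 2\<rceil>))"
      by (simp add: field_simps)
    finally show "norm (z (t + 1) i - (1 / real n) *\<^sub>R (\<Sum>k\<in>V. x t k - \<alpha> t *\<^sub>R g t k))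
            \<le> 8 / \<eta> * \<mu> ^ t * (\<Sum>k\<in>V. norm (x 0 k - \<alpha> 0 *\<^sub>R g 0 k))
              + 8 * real n * G / (\<eta> * (1 - \<mu>))
                * (\<alpha> 0 * \<mu> powr (real t / 2) + \<alpha> (nat \<lceil>real t / 2\<rceil>))"
      using main[OF i, of t] by linarith
  qed
qed

end
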